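(* Let $M$ be a metric structure. If for $1\leq j\leq n$ the definable predicates $\phi_j(x)=\phi_j(x_1,\dots,x_m)$ have the strong Erdős–Hajnal property, and $u:[0,1]^n\to[0,1]$ is continuous, then $u(\phi_1(x),\dots,\phi_n(x))$ also has the strong Erdős–Hajnal property.
   Context: A $[0,1]$-valued definable predicate $\phi(x_1,\dots,x_m)$ on $M$ has the strong Erdős–Hajnal property if for every $\varepsilon>0$ there is $\delta>0$ such that for all finite $A_i\subseteq M^{x_i}$ ($1\le i\le m$) there are $B_i\subseteq A_i$ with $|B_i|\geq\delta|A_i|$ such that $(B_1,\dots,B_m)$ is $(\phi,\varepsilon)$-homogeneous, i.e. $|\phi(a)-\phi(a')|\leq\varepsilon$ for all $a,a'\in B_1\times\dots\times B_m$. *)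

theory Defs
  imports "HOL-Analysis.Analysis"
begin

text \<open>A predicate in the variable tuple (x_1,...,x_m) is modelled as a real-valued
function on tuples a :: 'm \<Rightarrow> 'a, where the index type 'm (finite) enumerates the
variable blocks x_i and S i is the set M^{x_i} over which x_i ranges.\<close>

definition homogeneous :: "(('m \<Rightarrow> 'a) \<Rightarrow> real) \<Rightarrow> real \<Rightarrow> ('m \<Rightarrow> 'a set) \<Rightarrow> bool" where
  "homogeneous \<phi> \<epsilon> B \<longleftrightarrow>
     (\<forall>a a'. (\<forall>i. a i \<in> B i) \<longrightarrow> (\<forall>i. a' i \<in> B i) \<longrightarrow> \<bar>\<phi> a - \<phi> a'\<bar> \<le> \<epsilon>)"

definition strong_EH :: "('m \<Rightarrow> 'a set) \<Rightarrow> (('m \<Rightarrow> 'a) \<Rightarrow> real) \<Rightarrow> bool" where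
  "strong_EH S \<phi> \<longleftrightarrow>
     (\<forall>\<epsilon>>0. \<exists>\<delta>>0. \<forall>A. (\<forall>i. finite (A i) \<and> A i \<subseteq> S i) \<longrightarrow>
        (\<exists>B. (\<forall>i. B i \<subseteq> A i \<and> real (card (B i)) \<ge> \<delta> * real (card (A i)))
             \<and> homogeneous \<phi> \<epsilon> B))"

end

theory Submission
  imports Defs
begin

lemma iter_EH:
  fixes S :: "'m::finite \<Rightarrow> 'a set"
    and \<phi> :: "'n \<Rightarrow> ('m \<Rightarrow> 'a) \<Rightarrow> real"
  assumes sEH: "\<And>j. strong_EH S (\<phi> j)" and e: "e > 0"
    and fin: "finite J"
  shows "\<exists>\<delta>>0. \<forall>A. (\<forall>i. finite (A i) \<and> A i \<subseteq> S i) \<longrightarrow>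
        (\<exists>B. (\<forall>i. B i \<subseteq> A i \<and> real (card (B i)) \<ge> \<delta> * real (card (A i)))
             \<and> (\<forall>j\<in>J. homogeneous (\<phi> j) e B))"
  using fin
proof (induction J rule: finite_induct)
  case empty
  show ?case by (rule exI[of _ 1]) auto
next
  case (insert j J)
  then obtain d1 where d1: "d1 > 0" and H1: "\<forall>A. (\<forall>i. finite (A i) \<and> A i \<subseteq> S i) \<longrightarrow>
        (\<exists>B. (\<forall>i. B i \<subseteq> A i \<and> real (card (B i)) \<ge> d1 * real (card (A i)))
             \<and> (\<forall>j\<in>J. homogeneous (\<phi> j) e B))" by blast
  from sEH[of j] e obtain d2 where d2: "d2 > 0" and H2: "\<forall>A. (\<forall>i. finite (A i) \<and> A i \<subseteq> S i) \<longrightarrow>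
        (\<exists>B. (\<forall>i. B i \<subseteq> A i \<and> real (card (B i)) \<ge> d2 * real (card (A i)))
             \<and> homogeneous (\<phi> j) e B)" unfolding strong_EH_def by blast
  show ?case
  proof (rule exI[of _ "d2 * d1"], intro conjI allI impI)
    show "d2 * d1 > 0" using d1 d2 by simp
    fix A :: "'m \<Rightarrow> 'a set"
    assume A: "\<forall>i. finite (A i) \<and> A i \<subseteq> S i"
    then obtain B1 where B1: "\<forall>i. B1 i \<subseteq> A i \<and> real (card (B1 i)) \<ge> d1 * real (card (A i))"
      and h1: "\<forall>j\<in>J. homogeneous (\<phi> j) e B1" using H1 by blast
    have "\<forall>i. finite (B1 i) \<and> B1 i \<subseteq> S i" using A B1 by (meson finite_subset subset_trans)
    then obtain B2 where B2: "\<forall>i. B2 i \<subseteq> B1 i \<and> real (card (B2 i)) \<ge> d2 * real (card (B1 i))"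
      and h2: "homogeneous (\<phi> j) e B2" using H2 by blast
    show "\<exists>B. (\<forall>i. B i \<subseteq> A i \<and> d2 * d1 * real (card (A i)) \<le> real (card (B i))) \<and>
             (\<forall>j\<in>insert j J. homogeneous (\<phi> j) e B)"
    proof (rule exI[of _ B2], intro conjI allI ballI)
      fix i
      show "B2 i \<subseteq> A i" using B1 B2 by blast
      have "d2 * d1 * real (card (A i)) = d2 * (d1 * real (card (A i)))" by simp
      also have "\<dots> \<le> d2 * real (card (B1 i))" using B1 d2 by (simp add: mult_left_mono)
      also have "\<dots> \<le> real (card (B2 i))" using B2 by blast
      finally show "d2 * d1 * real (card (A i)) \<le> real (card (B2 i))" .
    next
      fix k assume "k \<in> insert j J"
      then show "homogeneous (\<phi> k) e B2"
      proof
        assume "k = j" then show ?thesis using h2 by simp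
      next
        assume "k \<in> J"
        then have "homogeneous (\<phi> k) e B1" using h1 by blast
        then show ?thesis using B2 unfolding homogeneous_def by blast
      qed
    qed
  qed
qed

theorem mainTheorem10:
  fixes S :: "'m::finite \<Rightarrow> 'a set"
    and \<phi> :: "'n::finite \<Rightarrow> ('m \<Rightarrow> 'a) \<Rightarrow> real"
    and u :: "real^'n \<Rightarrow> real"
  assumes valued: "\<And>j a. (\<forall>i. a i \<in> S i) \<Longrightarrow> \<phi> j a \<in> {0..1}"
    and sEH: "\<And>j. strong_EH S (\<phi> j)"
    and cont: "continuous_on {x. \<forall>j. x $ j \<in> {0..1}} u"
    and range: "u ` {x. \<forall>j. x $ j \<in> {0..1}} \<subseteq> {0..1}"
  shows "strong_EH S (\<lambda>a. u (\<chi> j. \<phi> j a))"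
  unfolding strong_EH_def
proof (intro allI impI)
  fix \<epsilon> :: real assume ep: "\<epsilon> > 0"
  let ?K = "{x::real^'n. \<forall>j. x $ j \<in> {0..1}}"
  have K: "?K = cbox (vec 0) (vec 1)" by (auto simp: mem_box_cart)
  have "compact ?K" unfolding K by simp
  then have "uniformly_continuous_on ?K u" using cont compact_uniformly_continuous by blast
  then obtain \<eta> where eta: "\<eta> > 0" and uc: "\<forall>x\<in>?K. \<forall>y\<in>?K. dist y x < \<eta> \<longrightarrow> dist (u y) (u x) < \<epsilon>"
    unfolding uniformly_continuous_on_def using ep by blast
  define e where "e = \<eta> / (2 * real CARD('n))"
  have e: "e > 0" unfolding e_def using eta by simp
  obtain \<delta> where d: "\<delta> > 0" and H: "\<forall>A. (\<forall>i. finite (A i) \<and> A i \<subseteq> S i) \<longrightarrow>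
        (\<exists>B. (\<forall>i. B i \<subseteq> A i \<and> real (card (B i)) \<ge> \<delta> * real (card (A i)))
             \<and> (\<forall>j\<in>UNIV. homogeneous (\<phi> j) e B))"
    using iter_EH[of S \<phi> e UNIV, OF sEH e finite_class.finite_UNIV] by blast
  show "\<exists>\<delta>>0. \<forall>A. (\<forall>i. finite (A i) \<and> A i \<subseteq> S i) \<longrightarrow>
        (\<exists>B. (\<forall>i. B i \<subseteq> A i \<and> \<delta> * real (card (A i)) \<le> real (card (B i))) \<and>
             homogeneous (\<lambda>a. u (\<chi> j. \<phi> j a)) \<epsilon> B)"
  proof (rule exI[of _ \<delta>], intro conjI allI impI d)
    fix A :: "'m \<Rightarrow> 'a set"
    assume A: "\<forall>i. finite (A i) \<and> A i \<subseteq> S i"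
    then obtain B where B: "\<forall>i. B i \<subseteq> A i \<and> real (card (B i)) \<ge> \<delta> * real (card (A i))"
      and h0: "\<forall>j\<in>UNIV. homogeneous (\<phi> j) e B" using H by meson
    have h: "\<forall>j. homogeneous (\<phi> j) e B" using h0 by simp
    show "\<exists>B. (\<forall>i. B i \<subseteq> A i \<and> \<delta> * real (card (A i)) \<le> real (card (B i))) \<and>
             homogeneous (\<lambda>a. u (\<chi> j. \<phi> j a)) \<epsilon> B"
    proof (rule exI[of _ B], intro conjI allI)
      fix i show "B i \<subseteq> A i" "\<delta> * real (card (A i)) \<le> real (card (B i))" using B by auto
    next
      show "homogeneous (\<lambda>a. u (\<chi> j. \<phi> j a)) \<epsilon> B"
        unfolding homogeneous_def
      proof (intro allI impI)
        fix a a' assume a: "\<forall>i. a i \<in> B i" and a': "\<forall>i. a' i \<in> B i"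
        have aS: "\<forall>i. a i \<in> S i" "\<forall>i. a' i \<in> S i" using a a' A B by (meson subsetD)+
        let ?x = "\<chi> j. \<phi> j a" and ?y = "\<chi> j. \<phi> j a'"
        have xK: "?x \<in> ?K" "?y \<in> ?K" using valued[OF aS(1)] valued[OF aS(2)] by simp_all
        have hj: "\<bar>\<phi> j a - \<phi> j a'\<bar> \<le> e" for j using h a a' unfolding homogeneous_def by blast
        have "dist ?x ?y = norm (?x - ?y)" by (simp add: dist_norm)
        also have "\<dots> \<le> (\<Sum>j\<in>UNIV. \<bar>(?x - ?y) $ j\<bar>)" by (rule norm_le_l1_cart)
        also have "\<dots> \<le> (\<Sum>j\<in>(UNIV::'n set). e)"
          by (rule sum_mono) (simp add: hj)
        also have "\<dots> = real CARD('n) * e" by simp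
        also have "\<dots> = \<eta> / 2" unfolding e_def by simp
        also have "\<dots> < \<eta>" using eta by simp
        finally have "dist ?x ?y < \<eta>" .
        then have "dist (u ?x) (u ?y) < \<epsilon>" by (rule uc[rule_format, OF xK(2) xK(1)])
        then show "\<bar>u ?x - u ?y\<bar> \<le> \<epsilon>" by (simp add: dist_real_def)
      qed
    qed
  qed
qed

end
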